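(* For a fuzzy Riesz space $(E,\mu)$ the following are equivalent: (1) $E$ has the fuzzy $\sigma$-order continuity property; (2) every fuzzy lattice homomorphism from $E$ into a fuzzy Archimedean Riesz space is fuzzy $\sigma$-order continuous; (3) every uniformly fuzzy closed fuzzy ideal of $E$ is a fuzzy $\sigma$-ideal.
   Context: A fuzzy order on a real vector space $E$ is a map $\mu:E\times E\to[0,1]$ with $\mu(x,x)=1$; $\mu(x,y)+\mu(y,x)>1$ implies $x=y$; and $\mu(x,z)\ge\sup_{y}\min(\mu(x,y),\mu(y,z))$. Write $x\le y$ for $\mu(x,y)>\frac12$; upper bounds, suprema and infima are taken with respect to this relation. $(E,\mu)$ is a fuzzy ordered linear space if $\mu(x_1,x_2)>\frac12$ implies $\mu(x_1,x_2)\le\mu(x_1+x,x_2+x)$ for all $x$ and $\mu(x_1,x_2)\le\mu(\alpha x_1,\alpha x_2)$ for all $\alpha>0$; it is a fuzzy Riesz space if $x\vee y=\sup\{x,y\}$, $x\wedge y=\inf\{x,y\}$ exist for all $x,y$. $E^+=\{x:0\le x\}$, $|x|=x\vee(-x)$. A fuzzy Riesz space is fuzzy Archimedean if for every nonzero $x\in E^+$ the set $\{\lambda x:\lambda>0\}$ is not bounded above. A fuzzy lattice homomorphism is a linear map $T$ with $T(x\vee y)=Tx\vee Ty$; a linear map is fuzzy positive if $0\le x$ implies $0\le Tx$. A sequence $x_n$ fuzzy order converges to $x$ if there is a sequence $y_n$ decreasing with infimum $0$ and $\mu(|x_n-x|,y_n)>\frac12$ for all $n$; $T$ is fuzzy $\sigma$-order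 continuous if $x_n\to0$ in fuzzy order implies $Tx_n\to0$ in fuzzy order. $E$ has the fuzzy $\sigma$-order continuity property if every fuzzy positive operator from $E$ into any fuzzy Archimedean fuzzy Riesz space is fuzzy $\sigma$-order continuous. A fuzzy ideal is a vector subspace $A$ such that $\mu(|x|,|y|)>\frac12$ and $y\in A$ imply $x\in A$; it is a fuzzy $\sigma$-ideal if $x_n\in A\cap E^+$, $x_n\uparrow x$ (increasing with supremum $x$) imply $x\in A$. A sequence converges relatively uniformly in fuzzy order to $x$ if there is $w\in E^+$ such that for each $\varepsilon>0$ there is $n(\varepsilon)$ with $\mu(|x-x_n|,\varepsilon w)>\frac12$ for $n>n(\varepsilon)$; a set is uniformly fuzzy closed if it contains all such limits of its sequences. *)

theory Defs
  imports Main "HOL.Real_Vector_Spaces"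
begin

text \<open>A fuzzy ordered space is given by a carrier set V (a subspace of a real vector
space type) and a fuzzy relation mu. The space E of the theorem has carrier UNIV.\<close>

definition fuzzy_order :: "'b set \<Rightarrow> ('b \<Rightarrow> 'b \<Rightarrow> real) \<Rightarrow> bool" where
  "fuzzy_order V \<mu> \<longleftrightarrow>
     (\<forall>x\<in>V. \<forall>y\<in>V. 0 \<le> \<mu> x y \<and> \<mu> x y \<le> 1) \<and>
     (\<forall>x\<in>V. \<mu> x x = 1) \<and>
     (\<forall>x\<in>V. \<forall>y\<in>V. \<mu> x y + \<mu> y x > 1 \<longrightarrow> x = y) \<and>
     (\<forall>x\<in>V. \<forall>z\<in>V. (SUP y\<in>V. min (\<mu> x y) (\<mu> y z)) \<le> \<mu> x z)"

definition fle :: "('b \<Rightarrow> 'b \<Rightarrow> real) \<Rightarrow> 'b \<Rightarrow> 'b \<Rightarrow> bool" where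
  "fle \<mu> x y \<longleftrightarrow> \<mu> x y > 1/2"

definition is_ub :: "'b set \<Rightarrow> ('b \<Rightarrow> 'b \<Rightarrow> real) \<Rightarrow> 'b set \<Rightarrow> 'b \<Rightarrow> bool" where
  "is_ub V \<mu> S u \<longleftrightarrow> u \<in> V \<and> (\<forall>s\<in>S. fle \<mu> s u)"

definition is_lb :: "'b set \<Rightarrow> ('b \<Rightarrow> 'b \<Rightarrow> real) \<Rightarrow> 'b set \<Rightarrow> 'b \<Rightarrow> bool" where
  "is_lb V \<mu> S u \<longleftrightarrow> u \<in> V \<and> (\<forall>s\<in>S. fle \<mu> u s)"

definition is_sup :: "'b set \<Rightarrow> ('b \<Rightarrow> 'b \<Rightarrow> real) \<Rightarrow> 'b set \<Rightarrow> 'b \<Rightarrow> bool" where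
  "is_sup V \<mu> S s \<longleftrightarrow> is_ub V \<mu> S s \<and> (\<forall>u. is_ub V \<mu> S u \<longrightarrow> fle \<mu> s u)"

definition is_inf :: "'b set \<Rightarrow> ('b \<Rightarrow> 'b \<Rightarrow> real) \<Rightarrow> 'b set \<Rightarrow> 'b \<Rightarrow> bool" where
  "is_inf V \<mu> S i \<longleftrightarrow> is_lb V \<mu> S i \<and> (\<forall>u. is_lb V \<mu> S u \<longrightarrow> fle \<mu> u i)"

definition fuzzy_ordered_linear_space ::
  "'b::real_vector set \<Rightarrow> ('b \<Rightarrow> 'b \<Rightarrow> real) \<Rightarrow> bool" where
  "fuzzy_ordered_linear_space V \<mu> \<longleftrightarrow>
     subspace V \<and> fuzzy_order V \<mu> \<and>
     (\<forall>x1\<in>V. \<forall>x2\<in>V. \<mu> x1 x2 > 1/2 \<longrightarrow>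
        (\<forall>x\<in>V. \<mu> x1 x2 \<le> \<mu> (x1 + x) (x2 + x)) \<and>
        (\<forall>\<alpha>::real. \<alpha> > 0 \<longrightarrow> \<mu> x1 x2 \<le> \<mu> (\<alpha> *\<^sub>R x1) (\<alpha> *\<^sub>R x2)))"

definition fuzzy_riesz :: "'b::real_vector set \<Rightarrow> ('b \<Rightarrow> 'b \<Rightarrow> real) \<Rightarrow> bool" where
  "fuzzy_riesz V \<mu> \<longleftrightarrow> fuzzy_ordered_linear_space V \<mu> \<and>
     (\<forall>x\<in>V. \<forall>y\<in>V. (\<exists>s. is_sup V \<mu> {x, y} s) \<and> (\<exists>i. is_inf V \<mu> {x, y} i))"

definition fsup :: "'b set \<Rightarrow> ('b \<Rightarrow> 'b \<Rightarrow> real) \<Rightarrow> 'b \<Rightarrow> 'b \<Rightarrow> 'b" where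
  "fsup V \<mu> x y = (THE s. is_sup V \<mu> {x, y} s)"

definition fabs :: "'b::real_vector set \<Rightarrow> ('b \<Rightarrow> 'b \<Rightarrow> real) \<Rightarrow> 'b \<Rightarrow> 'b" where
  "fabs V \<mu> x = fsup V \<mu> x (- x)"

definition fpos :: "'b::real_vector set \<Rightarrow> ('b \<Rightarrow> 'b \<Rightarrow> real) \<Rightarrow> 'b set" where
  "fpos V \<mu> = {x \<in> V. fle \<mu> 0 x}"

definition fuzzy_archimedean :: "'b::real_vector set \<Rightarrow> ('b \<Rightarrow> 'b \<Rightarrow> real) \<Rightarrow> bool" where
  "fuzzy_archimedean V \<mu> \<longleftrightarrow> fuzzy_riesz V \<mu> \<and>
     (\<forall>x \<in> fpos V \<mu>. x \<noteq> 0 \<longrightarrow> \<not> (\<exists>u. is_ub V \<mu> {l *\<^sub>R x | l::real. l > 0} u))"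

definition forder_conv ::
  "'b::real_vector set \<Rightarrow> ('b \<Rightarrow> 'b \<Rightarrow> real) \<Rightarrow> (nat \<Rightarrow> 'b) \<Rightarrow> 'b \<Rightarrow> bool" where
  "forder_conv V \<mu> xs x \<longleftrightarrow>
     (\<exists>ys. (\<forall>n. ys n \<in> V) \<and> (\<forall>n. fle \<mu> (ys (Suc n)) (ys n)) \<and>
          is_inf V \<mu> (range ys) 0 \<and>
          (\<forall>n. fle \<mu> (fabs V \<mu> (xs n - x)) (ys n)))"

definition fsigma_order_continuous ::
  "('a::real_vector \<Rightarrow> 'a \<Rightarrow> real) \<Rightarrow> 'b::real_vector set \<Rightarrow> ('b \<Rightarrow> 'b \<Rightarrow> real)
    \<Rightarrow> ('a \<Rightarrow> 'b) \<Rightarrow> bool" where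
  "fsigma_order_continuous \<mu> V \<nu> T \<longleftrightarrow>
     (\<forall>xs. forder_conv UNIV \<mu> xs 0 \<longrightarrow> forder_conv V \<nu> (T \<circ> xs) 0)"

definition fuzzy_positive ::
  "('a::real_vector \<Rightarrow> 'a \<Rightarrow> real) \<Rightarrow> 'b::real_vector set \<Rightarrow> ('b \<Rightarrow> 'b \<Rightarrow> real)
    \<Rightarrow> ('a \<Rightarrow> 'b) \<Rightarrow> bool" where
  "fuzzy_positive \<mu> V \<nu> T \<longleftrightarrow> linear T \<and> T ` UNIV \<subseteq> V \<and>
     (\<forall>x. fle \<mu> 0 x \<longrightarrow> fle \<nu> 0 (T x))"

definition fuzzy_lattice_hom ::
  "('a::real_vector \<Rightarrow> 'a \<Rightarrow> real) \<Rightarrow> 'b::real_vector set \<Rightarrow> ('b \<Rightarrow> 'b \<Rightarrow> real)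
    \<Rightarrow> ('a \<Rightarrow> 'b) \<Rightarrow> bool" where
  "fuzzy_lattice_hom \<mu> V \<nu> T \<longleftrightarrow> linear T \<and> T ` UNIV \<subseteq> V \<and>
     (\<forall>x y. T (fsup UNIV \<mu> x y) = fsup V \<nu> (T x) (T y))"

text \<open>Properties (1) and (2), for target spaces whose carrier lives in the type 'b.\<close>
definition fsigma_oc_property :: "('a::real_vector \<Rightarrow> 'a \<Rightarrow> real) \<Rightarrow> 'b::real_vector itself \<Rightarrow> bool" where
  "fsigma_oc_property \<mu> _ \<longleftrightarrow>
     (\<forall>(V::'b set) \<nu> T. fuzzy_archimedean V \<nu> \<and> fuzzy_positive \<mu> V \<nu> T
        \<longrightarrow> fsigma_order_continuous \<mu> V \<nu> T)"

definition fhom_sigma_oc_property :: "('a::real_vector \<Rightarrow> 'a \<Rightarrow> real) \<Rightarrow> 'b::real_vector itself \<Rightarrow> bool" where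
  "fhom_sigma_oc_property \<mu> _ \<longleftrightarrow>
     (\<forall>(V::'b set) \<nu> T. fuzzy_archimedean V \<nu> \<and> fuzzy_lattice_hom \<mu> V \<nu> T
        \<longrightarrow> fsigma_order_continuous \<mu> V \<nu> T)"

definition fuzzy_ideal :: "('a::real_vector \<Rightarrow> 'a \<Rightarrow> real) \<Rightarrow> 'a set \<Rightarrow> bool" where
  "fuzzy_ideal \<mu> A \<longleftrightarrow> subspace A \<and>
     (\<forall>x y. fle \<mu> (fabs UNIV \<mu> x) (fabs UNIV \<mu> y) \<and> y \<in> A \<longrightarrow> x \<in> A)"

definition fuzzy_sigma_ideal :: "('a::real_vector \<Rightarrow> 'a \<Rightarrow> real) \<Rightarrow> 'a set \<Rightarrow> bool" where
  "fuzzy_sigma_ideal \<mu> A \<longleftrightarrow> fuzzy_ideal \<mu> A \<and>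
     (\<forall>xs x. (\<forall>n. xs n \<in> A \<inter> fpos UNIV \<mu>) \<and> (\<forall>n. fle \<mu> (xs n) (xs (Suc n))) \<and>
             is_sup UNIV \<mu> (range xs) x \<longrightarrow> x \<in> A)"

definition ru_conv :: "('a::real_vector \<Rightarrow> 'a \<Rightarrow> real) \<Rightarrow> (nat \<Rightarrow> 'a) \<Rightarrow> 'a \<Rightarrow> bool" where
  "ru_conv \<mu> xs x \<longleftrightarrow>
     (\<exists>w \<in> fpos UNIV \<mu>. \<forall>\<epsilon>::real. \<epsilon> > 0 \<longrightarrow>
        (\<exists>N. \<forall>n>N. fle \<mu> (fabs UNIV \<mu> (x - xs n)) (\<epsilon> *\<^sub>R w)))"

definition uniformly_fuzzy_closed :: "('a::real_vector \<Rightarrow> 'a \<Rightarrow> real) \<Rightarrow> 'a set \<Rightarrow> bool" where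
  "uniformly_fuzzy_closed \<mu> A \<longleftrightarrow> (\<forall>xs x. (\<forall>n. xs n \<in> A) \<and> ru_conv \<mu> xs x \<longrightarrow> x \<in> A)"

end

theory Submission
  imports Defs "HOL-Library.Lattice_Algebras"
begin


section \<open>Generic facts on a fuzzy Riesz space (V, mu)\<close>

lemma fr_ols: "fuzzy_riesz V \<mu> \<Longrightarrow> fuzzy_ordered_linear_space V \<mu>"
  by (simp add: fuzzy_riesz_def)

lemma fr_sub: "fuzzy_riesz V \<mu> \<Longrightarrow> subspace V"
  by (simp add: fuzzy_riesz_def fuzzy_ordered_linear_space_def)

lemma fr_fo: "fuzzy_riesz V \<mu> \<Longrightarrow> fuzzy_order V \<mu>"
  by (simp add: fuzzy_riesz_def fuzzy_ordered_linear_space_def)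

lemma fo_refl: "fuzzy_order V \<mu> \<Longrightarrow> x \<in> V \<Longrightarrow> fle \<mu> x x"
  by (simp add: fuzzy_order_def fle_def)

lemma fo_antisym: "fuzzy_order V \<mu> \<Longrightarrow> x \<in> V \<Longrightarrow> y \<in> V \<Longrightarrow> fle \<mu> x y \<Longrightarrow> fle \<mu> y x \<Longrightarrow> x = y"
  unfolding fuzzy_order_def fle_def by force

lemma fo_trans: assumes "fuzzy_order V \<mu>" "x \<in> V" "y \<in> V" "z \<in> V" "fle \<mu> x y" "fle \<mu> y z"
  shows "fle \<mu> x z"
proof -
  have b: "\<forall>x\<in>V. \<forall>y\<in>V. 0 \<le> \<mu> x y \<and> \<mu> x y \<le> 1" and s: "(SUP u\<in>V. min (\<mu> x u) (\<mu> u z)) \<le> \<mu> x z"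
    using assms unfolding fuzzy_order_def by auto
  have "bdd_above ((\<lambda>u. min (\<mu> x u) (\<mu> u z)) ` V)"
    using b assms(2,4) by (intro bdd_aboveI[where M=1]) (auto simp: min_le_iff_disj)
  then have "min (\<mu> x y) (\<mu> y z) \<le> (SUP u\<in>V. min (\<mu> x u) (\<mu> u z))"
    using assms(3) by (rule cSUP_upper2) simp
  with s assms(5,6) show ?thesis unfolding fle_def by linarith
qed

lemma fr_add: assumes "fuzzy_riesz V \<mu>" "x \<in> V" "y \<in> V" "z \<in> V" "fle \<mu> x y"
  shows "fle \<mu> (x + z) (y + z)"
proof -
  have "\<forall>x1\<in>V. \<forall>x2\<in>V. \<mu> x1 x2 > 1/2 \<longrightarrow> (\<forall>x\<in>V. \<mu> x1 x2 \<le> \<mu> (x1 + x) (x2 + x))"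
    using assms(1) unfolding fuzzy_riesz_def fuzzy_ordered_linear_space_def by blast
  then have "\<mu> x y \<le> \<mu> (x + z) (y + z)" using assms(2-5) unfolding fle_def by blast
  then show ?thesis using assms(5) unfolding fle_def by linarith
qed

lemma fr_scale: assumes "fuzzy_riesz V \<mu>" "x \<in> V" "y \<in> V" "c > 0" "fle \<mu> x y"
  shows "fle \<mu> (c *\<^sub>R x) (c *\<^sub>R y)"
proof -
  have "\<forall>x1\<in>V. \<forall>x2\<in>V. \<mu> x1 x2 > 1/2 \<longrightarrow> (\<forall>\<alpha>::real. \<alpha> > 0 \<longrightarrow> \<mu> x1 x2 \<le> \<mu> (\<alpha> *\<^sub>R x1) (\<alpha> *\<^sub>R x2))"
    using assms(1) unfolding fuzzy_riesz_def fuzzy_ordered_linear_space_def by blast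
  then have "\<mu> x y \<le> \<mu> (c *\<^sub>R x) (c *\<^sub>R y)" using assms(2-5) unfolding fle_def by blast
  then show ?thesis using assms(5) unfolding fle_def by linarith
qed

lemma fr_sup_ex: "fuzzy_riesz V \<mu> \<Longrightarrow> x \<in> V \<Longrightarrow> y \<in> V \<Longrightarrow> \<exists>s. is_sup V \<mu> {x, y} s"
  unfolding fuzzy_riesz_def by blast

lemma fr_inf_ex: "fuzzy_riesz V \<mu> \<Longrightarrow> x \<in> V \<Longrightarrow> y \<in> V \<Longrightarrow> \<exists>s. is_inf V \<mu> {x, y} s"
  unfolding fuzzy_riesz_def by blast

lemma is_sup_unique: assumes "fuzzy_order V \<mu>" "is_sup V \<mu> S s" "is_sup V \<mu> S t" shows "s = t"
proof -
  have "s \<in> V" "t \<in> V" "fle \<mu> s t" "fle \<mu> t s" using assms(2,3) unfolding is_sup_def is_ub_def by auto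
  then show ?thesis using fo_antisym[OF assms(1)] by blast
qed

lemma fsup_is_sup: assumes "fuzzy_riesz V \<mu>" "x \<in> V" "y \<in> V"
  shows "is_sup V \<mu> {x, y} (fsup V \<mu> x y)"
proof -
  obtain s where s: "is_sup V \<mu> {x, y} s" using fr_sup_ex[OF assms] by blast
  show ?thesis unfolding fsup_def
    by (rule theI[of _ s]) (use s is_sup_unique[OF fr_fo[OF assms(1)]] in auto)
qed

lemma fsup_in: "fuzzy_riesz V \<mu> \<Longrightarrow> x \<in> V \<Longrightarrow> y \<in> V \<Longrightarrow> fsup V \<mu> x y \<in> V"
  using fsup_is_sup unfolding is_sup_def is_ub_def by blast

lemma fsup_ge1: "fuzzy_riesz V \<mu> \<Longrightarrow> x \<in> V \<Longrightarrow> y \<in> V \<Longrightarrow> fle \<mu> x (fsup V \<mu> x y)"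
  using fsup_is_sup unfolding is_sup_def is_ub_def by blast

lemma fsup_ge2: "fuzzy_riesz V \<mu> \<Longrightarrow> x \<in> V \<Longrightarrow> y \<in> V \<Longrightarrow> fle \<mu> y (fsup V \<mu> x y)"
  using fsup_is_sup unfolding is_sup_def is_ub_def by blast

lemma fsup_least: "fuzzy_riesz V \<mu> \<Longrightarrow> x \<in> V \<Longrightarrow> y \<in> V \<Longrightarrow> u \<in> V \<Longrightarrow> fle \<mu> x u \<Longrightarrow> fle \<mu> y u
   \<Longrightarrow> fle \<mu> (fsup V \<mu> x y) u"
  using fsup_is_sup unfolding is_sup_def is_ub_def by blast

lemma fsup_eqI: "fuzzy_riesz V \<mu> \<Longrightarrow> is_sup V \<mu> {x, y} s \<Longrightarrow> fsup V \<mu> x y = s"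
  unfolding fsup_def using is_sup_unique[OF fr_fo] by blast

section \<open>The space E\<close>

locale fR =
  fixes \<mu> :: "'a::real_vector \<Rightarrow> 'a \<Rightarrow> real"
  assumes R: "fuzzy_riesz UNIV \<mu>"
begin

definition flt :: "'a \<Rightarrow> 'a \<Rightarrow> bool" where "flt x y \<longleftrightarrow> fle \<mu> x y \<and> x \<noteq> y"
definition finf :: "'a \<Rightarrow> 'a \<Rightarrow> 'a" where "finf x y = - fsup UNIV \<mu> (- x) (- y)"

lemma le_refl: "fle \<mu> x x" using fo_refl[OF fr_fo[OF R]] by simp
lemma le_trans: "fle \<mu> x y \<Longrightarrow> fle \<mu> y z \<Longrightarrow> fle \<mu> x z" using fo_trans[OF fr_fo[OF R]] by blast
lemma le_antisym: "fle \<mu> x y \<Longrightarrow> fle \<mu> y x \<Longrightarrow> x = y" using fo_antisym[OF fr_fo[OF R]] by blast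
lemma le_add: "fle \<mu> x y \<Longrightarrow> fle \<mu> (x + z) (y + z)" using fr_add[OF R] by blast
lemma le_add_left: "fle \<mu> x y \<Longrightarrow> fle \<mu> (z + x) (z + y)" using le_add[of x y z] by (simp add: add.commute)
lemma le_neg: "fle \<mu> x y \<Longrightarrow> fle \<mu> (- y) (- x)"
  using le_add[of x y "- x - y"] by (simp add: algebra_simps)
lemma le_neg_iff: "fle \<mu> (- y) (- x) \<longleftrightarrow> fle \<mu> x y"
  using le_neg[of "-y" "-x"] le_neg[of x y] by auto
lemma sup1: "fle \<mu> x (fsup UNIV \<mu> x y)" using fsup_ge1[OF R] by blast
lemma sup2: "fle \<mu> y (fsup UNIV \<mu> x y)" using fsup_ge2[OF R] by blast
lemma sup_least: "fle \<mu> x u \<Longrightarrow> fle \<mu> y u \<Longrightarrow> fle \<mu> (fsup UNIV \<mu> x y) u" using fsup_least[OF R] by blast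
lemma inf1: "fle \<mu> (finf x y) x" using le_neg[OF sup1[where x="-x" and y="-y"]] by (simp add: finf_def)
lemma inf2: "fle \<mu> (finf x y) y" using le_neg[OF sup2[where x="-x" and y="-y"]] by (simp add: finf_def)
lemma inf_greatest: "fle \<mu> u x \<Longrightarrow> fle \<mu> u y \<Longrightarrow> fle \<mu> u (finf x y)"
  using le_neg[OF sup_least[OF le_neg le_neg]] by (simp add: finf_def)

sublocale L: lattice_ab_group_add_abs "fabs UNIV \<mu>" "(+)" 0 "(-)" uminus "fle \<mu>" flt finf "fsup UNIV \<mu>"
  apply unfold_locales
  apply (simp_all add: flt_def fabs_def le_refl inf1 inf2 inf_greatest sup1 sup2 sup_least le_add_left)
  using le_antisym apply blast
  using le_trans apply blast
  using le_antisym apply blast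
  done

lemma le_scale: "fle \<mu> x y \<Longrightarrow> 0 \<le> c \<Longrightarrow> fle \<mu> (c *\<^sub>R x) (c *\<^sub>R y)"
  using fr_scale[OF R, of x y c] le_refl by (cases "c = 0") auto

sublocale O: ordered_real_vector "(+)" 0 "(-)" uminus "fle \<mu>" flt scaleR
proof unfold_locales
  fix x y :: 'a and a :: real
  show "fle \<mu> x y \<Longrightarrow> 0 \<le> a \<Longrightarrow> fle \<mu> (a *\<^sub>R x) (a *\<^sub>R y)" by (rule le_scale)
next
  fix x :: 'a and a b :: real
  assume ab: "a \<le> b" and x: "fle \<mu> 0 x"
  have "fle \<mu> ((b - a) *\<^sub>R 0) ((b - a) *\<^sub>R x)" using le_scale[OF x] ab by simp
  then have "fle \<mu> (0 + a *\<^sub>R x) ((b - a) *\<^sub>R x + a *\<^sub>R x)" using le_add by simp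
  then show "fle \<mu> (a *\<^sub>R x) (b *\<^sub>R x)" by (simp add: algebra_simps)
qed

abbreviation esup where "esup \<equiv> fsup UNIV \<mu>"
abbreviation eabs where "eabs \<equiv> fabs UNIV \<mu>"

lemma scale_sup: assumes c: "0 < c" shows "c *\<^sub>R esup a b = esup (c *\<^sub>R a) (c *\<^sub>R b)"
proof (rule le_antisym)
  show "fle \<mu> (esup (c *\<^sub>R a) (c *\<^sub>R b)) (c *\<^sub>R esup a b)"
  proof (rule sup_least)
    show "fle \<mu> (c *\<^sub>R a) (c *\<^sub>R esup a b)" by (rule le_scale[OF sup1]) (use c in linarith)
    show "fle \<mu> (c *\<^sub>R b) (c *\<^sub>R esup a b)" by (rule le_scale[OF sup2]) (use c in linarith)
  qed
  have "fle \<mu> a ((1/c) *\<^sub>R esup (c *\<^sub>R a) (c *\<^sub>R b))"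
    using le_scale[OF sup1[where x="c *\<^sub>R a" and y="c *\<^sub>R b"], of "1/c"] c by simp
  moreover have "fle \<mu> b ((1/c) *\<^sub>R esup (c *\<^sub>R a) (c *\<^sub>R b))"
    using le_scale[OF sup2[where x="c *\<^sub>R a" and y="c *\<^sub>R b"], of "1/c"] c by simp
  ultimately have "fle \<mu> (esup a b) ((1/c) *\<^sub>R esup (c *\<^sub>R a) (c *\<^sub>R b))" by (rule sup_least)
  from le_scale[OF this, of c] c show "fle \<mu> (c *\<^sub>R esup a b) (esup (c *\<^sub>R a) (c *\<^sub>R b))" by simp
qed

lemma scale_inf: assumes c: "0 < c" shows "c *\<^sub>R finf a b = finf (c *\<^sub>R a) (c *\<^sub>R b)"
proof -
  have "c *\<^sub>R finf a b = - (c *\<^sub>R esup (-a) (-b))" by (simp only: finf_def scaleR_minus_right)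
  also have "\<dots> = - esup (c *\<^sub>R (-a)) (c *\<^sub>R (-b))" by (simp only: scale_sup[OF c])
  also have "\<dots> = finf (c *\<^sub>R a) (c *\<^sub>R b)" by (simp only: finf_def scaleR_minus_right)
  finally show ?thesis .
qed

lemma abs_scale: "eabs (c *\<^sub>R x) = \<bar>c\<bar> *\<^sub>R eabs x"
proof -
  consider "c = 0" | "c > 0" | "c < 0" by linarith
  then show ?thesis
  proof cases
    case 1 then show ?thesis by simp
  next
    case 2 then show ?thesis using scale_sup[OF 2, of x "-x"] by (simp add: fabs_def scaleR_minus_right)
  next
    case 3
    have "eabs (c *\<^sub>R x) = eabs ((-c) *\<^sub>R x)" using L.abs_minus_cancel[of "c *\<^sub>R x"] by simp
    also have "\<dots> = (-c) *\<^sub>R eabs x" using scale_sup[of "-c" x "-x"] 3 by (simp add: fabs_def scaleR_minus_right)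
    finally show ?thesis using 3 by simp
  qed
qed

lemma inf_add_le: assumes "fle \<mu> 0 a" "fle \<mu> 0 b" "fle \<mu> 0 c"
  shows "fle \<mu> (finf (a + b) c) (finf a c + finf b c)"
proof -
  have "finf a c + finf b c = finf (a + finf b c) (c + finf b c)" by (rule L.add_inf_distrib_right)
  also have "\<dots> = finf (finf (a + b) (a + c)) (finf (c + b) (c + c))"
    by (simp add: L.add_inf_distrib_left)
  finally have e: "finf a c + finf b c = finf (finf (a + b) (a + c)) (finf (c + b) (c + c))" .
  have c1: "fle \<mu> c (a + c)" using L.add_right_mono[OF assms(1), of c] by simp
  have c2: "fle \<mu> c (c + b)" using L.add_left_mono[OF assms(2), of c] by simp
  have c3: "fle \<mu> c (c + c)" using L.add_left_mono[OF assms(3), of c] by simp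
  show ?thesis unfolding e
    by (intro L.le_infI L.inf_le1 L.order_trans[OF L.inf_le2 c1] L.order_trans[OF L.inf_le2 c2]
         L.order_trans[OF L.inf_le2 c3])
qed

lemma inf_scale_le: assumes "1 \<le> c" "fle \<mu> 0 g"
  shows "fle \<mu> (finf (c *\<^sub>R a) g) (c *\<^sub>R finf a g)"
proof -
  have "fle \<mu> g (c *\<^sub>R g)" using O.scaleR_right_mono[OF assms(1) assms(2)] by simp
  then have "fle \<mu> (finf (c *\<^sub>R a) g) (finf (c *\<^sub>R a) (c *\<^sub>R g))"
    by (intro L.inf_mono L.order_refl)
  also have "finf (c *\<^sub>R a) (c *\<^sub>R g) = c *\<^sub>R finf a g" using scale_inf[of c a g] assms(1) by simp
  finally show ?thesis .
qed

lemma pprt_disj: "finf (L.pprt u) (L.pprt (- u)) = 0"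
proof -
  have "finf (L.pprt u) (- L.nprt u) + L.nprt u = finf (L.pprt u + L.nprt u) 0"
    by (simp add: L.add_inf_distrib_right)
  also have "\<dots> = L.nprt u" using L.prts[of u] by (simp add: L.nprt_def)
  finally show ?thesis by (simp add: L.pprt_neg)
qed

end



lemma Ftrans: "fuzzy_riesz V \<nu> \<Longrightarrow> x \<in> V \<Longrightarrow> y \<in> V \<Longrightarrow> z \<in> V \<Longrightarrow> fle \<nu> x y \<Longrightarrow> fle \<nu> y z \<Longrightarrow> fle \<nu> x z"
  using fo_trans[OF fr_fo] by blast

lemma Frefl: "fuzzy_riesz V \<nu> \<Longrightarrow> x \<in> V \<Longrightarrow> fle \<nu> x x"
  using fo_refl[OF fr_fo] by blast

lemma Fadd_right: "fuzzy_riesz V \<nu> \<Longrightarrow> x \<in> V \<Longrightarrow> y \<in> V \<Longrightarrow> z \<in> V \<Longrightarrow> fle \<nu> x y \<Longrightarrow> fle \<nu> (x + z) (y + z)"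
  by (rule fr_add)

lemma Fscale0: assumes "fuzzy_riesz V \<nu>" "x \<in> V" "y \<in> V" "0 \<le> c" "fle \<nu> x y"
  shows "fle \<nu> (c *\<^sub>R x) (c *\<^sub>R y)"
proof (cases "c = 0")
  case True then show ?thesis using Frefl[OF assms(1) subspace_0[OF fr_sub[OF assms(1)]]] by simp
next
  case False then show ?thesis using fr_scale[OF assms(1-3) _ assms(5)] assms(4) by simp
qed

lemma Fsub_le: assumes "fuzzy_riesz V \<nu>" "x \<in> V" "y \<in> V" "z \<in> V" "fle \<nu> x (y + z)"
  shows "fle \<nu> (x - z) y"
  using fr_add[OF assms(1,2) subspace_add[OF fr_sub[OF assms(1)] assms(3,4)] subspace_neg[OF fr_sub[OF assms(1)] assms(4)] assms(5)]
  by (simp add: algebra_simps)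

lemma Fle_add: assumes "fuzzy_riesz V \<nu>" "x \<in> V" "y \<in> V" "z \<in> V" "fle \<nu> (x - z) y"
  shows "fle \<nu> x (y + z)"
  using fr_add[OF assms(1) subspace_diff[OF fr_sub[OF assms(1)] assms(2,4)] assms(3) assms(4) assms(5)]
  by (simp add: algebra_simps)

lemma Fadd_mono: assumes "fuzzy_riesz V \<nu>" "a \<in> V" "b \<in> V" "c \<in> V" "d \<in> V" "fle \<nu> a b" "fle \<nu> c d"
  shows "fle \<nu> (a + c) (b + d)"
proof -
  have S: "subspace V" using fr_sub[OF assms(1)] .
  have "fle \<nu> (a + c) (b + c)" using fr_add[OF assms(1,2,3,4,6)] .
  moreover have "fle \<nu> (c + b) (d + b)" using fr_add[OF assms(1,4,5,3,7)] .
  ultimately show ?thesis using Ftrans[OF assms(1), of "a + c" "b + c" "b + d"] S assms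
    by (simp add: subspace_add add.commute)
qed

lemma Farch: assumes Ar: "fuzzy_archimedean V \<nu>" and z: "z \<in> V" and v: "v \<in> V" and v0: "fle \<nu> 0 v"
  and H: "\<And>k::nat. 0 < k \<Longrightarrow> fle \<nu> (real k *\<^sub>R z) v"
  shows "fle \<nu> z 0"
proof -
  have FR: "fuzzy_riesz V \<nu>" using Ar by (simp add: fuzzy_archimedean_def)
  have S: "subspace V" using fr_sub[OF FR] .
  have V0: "0 \<in> V" using subspace_0[OF S] .
  define p where "p = fsup V \<nu> z 0"
  have pV: "p \<in> V" unfolding p_def using fsup_in[OF FR z V0] .
  have p0: "fle \<nu> 0 p" unfolding p_def using fsup_ge2[OF FR z V0] .
  have zp: "fle \<nu> z p" unfolding p_def using fsup_ge1[OF FR z V0] .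
  have pk: "fle \<nu> p ((1 / real k) *\<^sub>R v)" if k: "0 < k" for k :: nat
  proof -
    have "fle \<nu> ((1 / real k) *\<^sub>R (real k *\<^sub>R z)) ((1 / real k) *\<^sub>R v)"
      by (rule Fscale0[OF FR subspace_scale[OF S z] v _ H[OF k]]) simp
    then have "fle \<nu> z ((1 / real k) *\<^sub>R v)" using k by simp
    moreover have "fle \<nu> 0 ((1 / real k) *\<^sub>R v)" using Fscale0[OF FR V0 v _ v0, of "1 / real k"] by simp
    ultimately show ?thesis unfolding p_def using fsup_least[OF FR z V0 subspace_scale[OF S v]] by blast
  qed
  have ub: "is_ub V \<nu> {l *\<^sub>R p | l::real. l > 0} v"
    unfolding is_ub_def
  proof (intro conjI ballI v)
    fix s assume "s \<in> {l *\<^sub>R p | l::real. l > 0}"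
    then obtain l :: real where l: "l > 0" "s = l *\<^sub>R p" by blast
    define k where "k = nat \<lceil>l\<rceil>"
    have k: "0 < k" "l \<le> real k" using l unfolding k_def by linarith+
    have "fle \<nu> ((real k - l) *\<^sub>R 0) ((real k - l) *\<^sub>R p)" using Fscale0[OF FR V0 pV _ p0] k by simp
    then have "fle \<nu> (0 + l *\<^sub>R p) ((real k - l) *\<^sub>R p + l *\<^sub>R p)"
      using fr_add[OF FR V0 subspace_scale[OF S pV] subspace_scale[OF S pV]] by simp
    then have a: "fle \<nu> (l *\<^sub>R p) (real k *\<^sub>R p)" by (simp add: algebra_simps)
    have "fle \<nu> (real k *\<^sub>R p) (real k *\<^sub>R ((1 / real k) *\<^sub>R v))"
      by (rule Fscale0[OF FR pV subspace_scale[OF S v] _ pk[OF k(1)]]) simp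
    then have b: "fle \<nu> (real k *\<^sub>R p) v" using k by simp
    show "fle \<nu> s v" using Ftrans[OF FR _ _ v a b] l S pV by (simp add: subspace_scale)
  qed
  have "p \<in> fpos V \<nu>" using pV p0 by (simp add: fpos_def)
  then have "p = 0" using Ar ub unfolding fuzzy_archimedean_def by blast
  then show ?thesis using zp by simp
qed



context fR begin

lemma T_lin: "fuzzy_positive \<mu> V \<nu> T \<Longrightarrow> linear T" by (simp add: fuzzy_positive_def)
lemma T_in: "fuzzy_positive \<mu> V \<nu> T \<Longrightarrow> T x \<in> V" by (auto simp: fuzzy_positive_def)
lemma T_pos: "fuzzy_positive \<mu> V \<nu> T \<Longrightarrow> fle \<mu> 0 x \<Longrightarrow> fle \<nu> 0 (T x)" by (simp add: fuzzy_positive_def)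

lemma le_diff0: "fle \<mu> a b \<Longrightarrow> fle \<mu> 0 (b - a)"
  using le_add[of a b "- a"] by simp

lemma T_mono: assumes FR: "fuzzy_riesz V \<nu>" and Tp: "fuzzy_positive \<mu> V \<nu> T" and ab: "fle \<mu> a b"
  shows "fle \<nu> (T a) (T b)"
proof -
  have "fle \<nu> 0 (T (b - a))" using T_pos[OF Tp le_diff0[OF ab]] .
  then have "fle \<nu> 0 (T b - T a)" using linear_diff[OF T_lin[OF Tp]] by simp
  then have "fle \<nu> (0 + T a) (T b - T a + T a)"
    using fr_add[OF FR subspace_0[OF fr_sub[OF FR]] _ T_in[OF Tp]] T_in[OF Tp] subspace_diff[OF fr_sub[OF FR]]
    by blast
  then show ?thesis by simp
qed

lemma ys_anti: assumes "\<forall>n. fle \<mu> (ys (Suc n)) (ys n)" shows "m \<le> n \<Longrightarrow> fle \<mu> (ys n) (ys m)"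
proof (induction n)
  case 0 then show ?case using le_refl by simp
next
  case (Suc n)
  show ?case
  proof (cases "m = Suc n")
    case True then show ?thesis using le_refl by simp
  next
    case False then have "m \<le> n" using Suc.prems by simp
    then show ?thesis using Suc.IH assms le_trans by blast
  qed
qed

lemma inf_zero:
  fixes V :: "'b::real_vector set"
  assumes P3: "\<forall>A. fuzzy_ideal \<mu> A \<and> uniformly_fuzzy_closed \<mu> A \<longrightarrow> fuzzy_sigma_ideal \<mu> A"
    and Ar: "fuzzy_archimedean V \<nu>" and Tp: "fuzzy_positive \<mu> V \<nu> T"
    and ys0: "\<forall>n. fle \<mu> 0 (ys n)" and dec: "\<forall>n. fle \<mu> (ys (Suc n)) (ys n)"
    and yinf: "is_inf UNIV \<mu> (range ys) 0"
    and z: "z \<in> V" and zl: "\<forall>n. fle \<nu> z (T (ys n))"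
  shows "fle \<nu> z 0"
proof -
  have FR: "fuzzy_riesz V \<nu>" using Ar by (simp add: fuzzy_archimedean_def)
  have S: "subspace V" using fr_sub[OF FR] .
  have V0: "0 \<in> V" using subspace_0[OF S] .
  have TV: "\<And>x. T x \<in> V" using T_in[OF Tp] .
  have lin: "linear T" using T_lin[OF Tp] .
  have key: "fle \<nu> (real k *\<^sub>R z) (T (ys 0))" if k: "0 < k" for k :: nat
  proof -
    define kk where "kk = real k"
    have kk1: "1 \<le> kk" using k unfolding kk_def by simp
    define g where "g n = L.pprt (kk *\<^sub>R ys n - ys 0)" for n
    define e where "e m = L.pprt (ys 0 - kk *\<^sub>R ys m)" for m
    define a where "a x n = T (finf (eabs x) (g n))" for x n
    define B where "B = {x. \<forall>w\<in>V. (\<forall>n. fle \<nu> w (a x n)) \<longrightarrow> fle \<nu> w 0}"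
    have g0: "fle \<mu> 0 (g n)" for n unfolding g_def by (rule L.zero_le_pprt)
    have gdec: "fle \<mu> (g n) (g m)" if "m \<le> n" for m n
    proof -
      have "fle \<mu> (ys n) (ys m)" using ys_anti[OF dec that] .
      then have "fle \<mu> (kk *\<^sub>R ys n) (kk *\<^sub>R ys m)" using kk1 by (intro le_scale) auto
      then have "fle \<mu> (kk *\<^sub>R ys n - ys 0) (kk *\<^sub>R ys m - ys 0)" by (rule L.diff_right_mono)
      then show ?thesis unfolding g_def by (rule L.pprt_mono)
    qed
    have aV: "a x n \<in> V" for x n unfolding a_def by (rule TV)
    have adec: "fle \<nu> (a x n) (a x m)" if "m \<le> n" for x m n
      unfolding a_def by (intro T_mono[OF FR Tp] L.inf_mono L.order_refl gdec that)
    have amono: "fle \<nu> (a x n) (a y n)" if "fle \<mu> (eabs x) (eabs y)" for x y n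
      unfolding a_def by (intro T_mono[OF FR Tp] L.inf_mono L.order_refl that)
    have aB: "fle \<nu> w 0" if "x \<in> B" "w \<in> V" "\<And>n. fle \<nu> w (a x n)" for x w
      using that unfolding B_def by blast
    have memB: "x \<in> B" if "\<And>w. w \<in> V \<Longrightarrow> (\<And>n. fle \<nu> w (a x n)) \<Longrightarrow> fle \<nu> w 0" for x
      using that unfolding B_def by blast
    have B0: "0 \<in> B"
    proof (rule memB)
      fix w assume w: "w \<in> V" and H: "\<And>n. fle \<nu> w (a 0 n)"
      have "a 0 0 = 0" unfolding a_def using L.inf_absorb1[OF g0[of 0]] linear_0[OF lin] by simp
      then show "fle \<nu> w 0" using H[of 0] by simp
    qed
    have Badd: "x + y \<in> B" if x: "x \<in> B" and y: "y \<in> B" for x y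
    proof (rule memB)
      fix w assume w: "w \<in> V" and H: "\<And>n. fle \<nu> w (a (x + y) n)"
      have s: "fle \<nu> (a (x + y) n) (a x n + a y n)" for n
      proof -
        have "fle \<mu> (finf (eabs (x + y)) (g n)) (finf (eabs x + eabs y) (g n))"
          by (intro L.inf_mono L.order_refl L.abs_triangle_ineq)
        also have "fle \<mu> \<dots> (finf (eabs x) (g n) + finf (eabs y) (g n))"
          by (intro inf_add_le L.abs_ge_zero g0)
        finally have "fle \<nu> (a (x + y) n) (T (finf (eabs x) (g n) + finf (eabs y) (g n)))"
          unfolding a_def by (rule T_mono[OF FR Tp])
        then show ?thesis unfolding a_def linear_add[OF lin] .
      qed
      have wy: "fle \<nu> (w - a y m) 0" for m
      proof (rule aB[OF x subspace_diff[OF S w aV]])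
        fix n
        define N where "N = max n m"
        have "fle \<nu> w (a x N + a y N)" using Ftrans[OF FR w aV _ H s] subspace_add[OF S aV aV] by blast
        moreover have "fle \<nu> (a x N + a y N) (a x n + a y m)"
          by (rule Fadd_mono[OF FR aV aV aV aV adec adec]) (simp_all add: N_def)
        ultimately have "fle \<nu> w (a x n + a y m)" using Ftrans[OF FR w] subspace_add[OF S aV aV] by blast
        then show "fle \<nu> (w - a y m) (a x n)" by (rule Fsub_le[OF FR w aV aV])
      qed
      show "fle \<nu> w 0"
      proof (rule aB[OF y w])
        fix m show "fle \<nu> w (a y m)" using Fle_add[OF FR w V0 aV wy[of m]] by simp
      qed
    qed
    have Bscale: "c *\<^sub>R x \<in> B" if x: "x \<in> B" for c x
    proof (rule memB)
      fix w assume w: "w \<in> V" and H: "\<And>n. fle \<nu> w (a (c *\<^sub>R x) n)"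
      have ab: "eabs (c *\<^sub>R x) = \<bar>c\<bar> *\<^sub>R eabs x" by (rule abs_scale)
      show "fle \<nu> w 0"
      proof (cases "\<bar>c\<bar> \<le> 1")
        case True
        have "fle \<mu> (\<bar>c\<bar> *\<^sub>R eabs x) (1 *\<^sub>R eabs x)"
          by (rule O.scaleR_right_mono[OF True L.abs_ge_zero])
        then have "fle \<mu> (eabs (c *\<^sub>R x)) (eabs x)" using ab by simp
        then show ?thesis using aB[OF x w] Ftrans[OF FR w aV aV H amono] by blast
      next
        case False
        let ?c = "\<bar>c\<bar>"
        have c1: "1 \<le> ?c" using False by simp
        have "fle \<nu> (a (c *\<^sub>R x) n) (?c *\<^sub>R a x n)" for n
        proof -
          have "fle \<nu> (a (c *\<^sub>R x) n) (T (?c *\<^sub>R finf (eabs x) (g n)))"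
            unfolding a_def ab by (intro T_mono[OF FR Tp] inf_scale_le c1 g0)
          then show ?thesis unfolding a_def linear_scale[OF lin] .
        qed
        then have "fle \<nu> w (?c *\<^sub>R a x n)" for n
          using Ftrans[OF FR w aV subspace_scale[OF S aV] H] by blast
        then have "fle \<nu> ((1 / ?c) *\<^sub>R w) ((1 / ?c) *\<^sub>R (?c *\<^sub>R a x n))" for n
          by (intro Fscale0[OF FR w subspace_scale[OF S aV]]) auto
        moreover have "c \<noteq> 0" using c1 by auto
        ultimately have "fle \<nu> ((1 / ?c) *\<^sub>R w) (a x n)" for n by simp
        then have "fle \<nu> ((1 / ?c) *\<^sub>R w) 0" by (intro aB[OF x subspace_scale[OF S w]])
        then have "fle \<nu> (?c *\<^sub>R ((1 / ?c) *\<^sub>R w)) (?c *\<^sub>R 0)"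
          by (intro Fscale0[OF FR subspace_scale[OF S w] V0]) auto
        then show ?thesis using \<open>c \<noteq> 0\<close> by simp
      qed
    qed
    have Bsolid: "x \<in> B" if "fle \<mu> (eabs x) (eabs y)" "y \<in> B" for x y
    proof (rule memB)
      fix w assume w: "w \<in> V" and H: "\<And>n. fle \<nu> w (a x n)"
      show "fle \<nu> w 0" using aB[OF that(2) w] Ftrans[OF FR w aV aV H amono[OF that(1)]] by blast
    qed
    have Bsub: "subspace B" unfolding subspace_def using B0 Badd Bscale by blast
    have Bideal: "fuzzy_ideal \<mu> B" unfolding fuzzy_ideal_def using Bsub Bsolid by blast
    have Bclosed: "uniformly_fuzzy_closed \<mu> B"
      unfolding uniformly_fuzzy_closed_def
    proof (intro allI impI, elim conjE)
      fix xs x assume xsB: "\<forall>n. xs n \<in> B" and ru: "ru_conv \<mu> xs x"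
      obtain w0 where w0: "w0 \<in> fpos UNIV \<mu>"
        and R: "\<forall>\<epsilon>::real. \<epsilon> > 0 \<longrightarrow> (\<exists>N. \<forall>n>N. fle \<mu> (eabs (x - xs n)) (\<epsilon> *\<^sub>R w0))"
        using ru unfolding ru_conv_def by blast
      have w00: "fle \<mu> 0 w0" using w0 by (simp add: fpos_def)
      show "x \<in> B"
      proof (rule memB)
        fix w assume w: "w \<in> V" and H: "\<And>n. fle \<nu> w (a x n)"
        show "fle \<nu> w 0"
        proof (rule Farch[OF Ar w TV[of w0]])
          show "fle \<nu> 0 (T w0)" using T_pos[OF Tp w00] .
          fix k' :: nat assume k': "0 < k'"
          define \<epsilon> where "\<epsilon> = 1 / real k'"
          have ep: "\<epsilon> > 0" using k' unfolding \<epsilon>_def by simp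
          obtain N where N: "\<forall>n>N. fle \<mu> (eabs (x - xs n)) (\<epsilon> *\<^sub>R w0)" using R ep by blast
          define j where "j = Suc N"
          have xj: "fle \<mu> (eabs (x - xs j)) (\<epsilon> *\<^sub>R w0)" using N unfolding j_def by simp
          have b: "fle \<mu> (finf (eabs x) (g n)) (\<epsilon> *\<^sub>R w0 + finf (eabs (xs j)) (g n))" for n
          proof -
            have t: "fle \<mu> (eabs x) (eabs (x - xs j) + eabs (xs j))"
              using L.abs_triangle_ineq[of "x - xs j" "xs j"] by simp
            have "fle \<mu> (finf (eabs x) (g n)) (finf (eabs (x - xs j) + eabs (xs j)) (g n))"
              by (intro L.inf_mono L.order_refl t)
            also have "fle \<mu> \<dots> (finf (eabs (x - xs j)) (g n) + finf (eabs (xs j)) (g n))"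
              by (intro inf_add_le L.abs_ge_zero g0)
            also have "fle \<mu> \<dots> (eabs (x - xs j) + finf (eabs (xs j)) (g n))"
              by (intro L.add_right_mono L.inf_le1)
            also have "fle \<mu> \<dots> (\<epsilon> *\<^sub>R w0 + finf (eabs (xs j)) (g n))"
              by (intro L.add_right_mono xj)
            finally show ?thesis .
          qed
          have "fle \<nu> (a x n) (\<epsilon> *\<^sub>R T w0 + a (xs j) n)" for n
            using T_mono[OF FR Tp b[of n]] unfolding a_def linear_add[OF lin] linear_scale[OF lin] .
          then have "fle \<nu> w (\<epsilon> *\<^sub>R T w0 + a (xs j) n)" for n
            using Ftrans[OF FR w aV _ H] subspace_add[OF S subspace_scale[OF S TV] aV] by blast
          then have "fle \<nu> (w - \<epsilon> *\<^sub>R T w0) (a (xs j) n)" for n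
            using Fsub_le[OF FR w aV subspace_scale[OF S TV]] by (simp add: add.commute)
          then have "fle \<nu> (w - \<epsilon> *\<^sub>R T w0) 0"
            using aB[OF xsB[rule_format, of j] subspace_diff[OF S w subspace_scale[OF S TV]]] by blast
          then have "fle \<nu> w (0 + \<epsilon> *\<^sub>R T w0)"
            by (rule Fle_add[OF FR w V0 subspace_scale[OF S TV]])
          then have "fle \<nu> (real k' *\<^sub>R w) (real k' *\<^sub>R (\<epsilon> *\<^sub>R T w0))"
            by (intro Fscale0[OF FR w subspace_scale[OF S TV]]) auto
          then show "fle \<nu> (real k' *\<^sub>R w) (T w0)" using k' unfolding \<epsilon>_def by simp
        qed
      qed
    qed
    have Bsig: "fuzzy_sigma_ideal \<mu> B" using P3 Bideal Bclosed by blast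
    have e0: "fle \<mu> 0 (e m)" for m unfolding e_def by (rule L.zero_le_pprt)
    have e_in: "e m \<in> B \<inter> fpos UNIV \<mu>" for m
    proof -
      have "e m \<in> B"
      proof (rule memB)
        fix w assume w: "w \<in> V" and H: "\<And>n. fle \<nu> w (a (e m) n)"
        have gm: "g m = L.pprt (- (ys 0 - kk *\<^sub>R ys m))" unfolding g_def by simp
        have "finf (eabs (e m)) (g m) = 0"
          using L.abs_of_nonneg[OF e0[of m]] pprt_disj[of "ys 0 - kk *\<^sub>R ys m"] unfolding gm e_def by simp
        then have "a (e m) m = 0" unfolding a_def using linear_0[OF lin] by simp
        then show "fle \<nu> w 0" using H[of m] by simp
      qed
      then show ?thesis using e0 by (simp add: fpos_def)
    qed
    have e_inc: "fle \<mu> (e m) (e (Suc m))" for m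
    proof -
      have "fle \<mu> (kk *\<^sub>R ys (Suc m)) (kk *\<^sub>R ys m)" using kk1 dec by (intro le_scale) auto
      then have "fle \<mu> (ys 0 - kk *\<^sub>R ys m) (ys 0 - kk *\<^sub>R ys (Suc m))" by (rule L.diff_left_mono)
      then show ?thesis unfolding e_def by (rule L.pprt_mono)
    qed
    have kys0: "fle \<mu> 0 (kk *\<^sub>R ys m)" for m using le_scale[OF ys0[rule_format, of m], of kk] kk1 by simp
    have e_sup: "is_sup UNIV \<mu> (range e) (ys 0)"
      unfolding is_sup_def is_ub_def
    proof (intro conjI allI impI ballI UNIV_I)
      fix s assume "s \<in> range e"
      then obtain m where sm: "s = e m" by blast
      have "fle \<mu> (ys 0 - kk *\<^sub>R ys m) (ys 0)"
        using L.add_left_mono[OF kys0[of m], of "ys 0 - kk *\<^sub>R ys m"] by simp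
      then show "fle \<mu> s (ys 0)" unfolding sm e_def L.pprt_def
        by (rule sup_least) (use ys0 in blast)
    next
      fix u assume "u \<in> UNIV \<and> (\<forall>s\<in>range e. fle \<mu> s u)"
      then have eu: "fle \<mu> (e m) u" for m by blast
      have "fle \<mu> (ys 0 - kk *\<^sub>R ys m) u" for m
      proof -
        have "fle \<mu> (esup (ys 0 - kk *\<^sub>R ys m) 0) u" using eu[of m] unfolding e_def L.pprt_def .
        then show ?thesis using le_trans[OF sup1] by blast
      qed
      then have "fle \<mu> (ys 0 - kk *\<^sub>R ys m + (kk *\<^sub>R ys m - u)) (u + (kk *\<^sub>R ys m - u))" for m
        by (rule le_add)
      then have "fle \<mu> (ys 0 - u) (kk *\<^sub>R ys m)" for m by (simp add: algebra_simps)
      then have "fle \<mu> ((1 / kk) *\<^sub>R (ys 0 - u)) ((1 / kk) *\<^sub>R (kk *\<^sub>R ys m))" for m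
        using kk1 by (intro le_scale) auto
      then have "fle \<mu> ((1 / kk) *\<^sub>R (ys 0 - u)) (ys m)" for m using kk1 by simp
      then have "is_lb UNIV \<mu> (range ys) ((1 / kk) *\<^sub>R (ys 0 - u))" unfolding is_lb_def by blast
      then have "fle \<mu> ((1 / kk) *\<^sub>R (ys 0 - u)) 0" using yinf unfolding is_inf_def by blast
      then have "fle \<mu> (kk *\<^sub>R ((1 / kk) *\<^sub>R (ys 0 - u))) (kk *\<^sub>R 0)" using kk1 by (intro le_scale) auto
      then have "fle \<mu> (ys 0 - u) 0" using kk1 by simp
      then have "fle \<mu> (ys 0 - u + u) (0 + u)" by (rule le_add)
      then show "fle \<mu> (ys 0) u" by simp
    qed
    have "ys 0 \<in> B" using Bsig e_in e_inc e_sup unfolding fuzzy_sigma_ideal_def by blast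
    then have kB: "kk *\<^sub>R ys 0 \<in> B" by (rule Bscale)
    have zk: "kk *\<^sub>R z - T (ys 0) \<in> V" using subspace_diff[OF S subspace_scale[OF S z] TV] .
    have "fle \<nu> (kk *\<^sub>R z - T (ys 0)) 0"
    proof (rule aB[OF kB zk])
      fix n
      have gle: "fle \<mu> (g n) (kk *\<^sub>R ys 0)" unfolding g_def L.pprt_def
      proof (rule sup_least[OF _ kys0])
        have "fle \<mu> (kk *\<^sub>R ys n - ys 0) (kk *\<^sub>R ys n)"
          using L.add_left_mono[OF ys0[rule_format, of 0], of "kk *\<^sub>R ys n - ys 0"] by simp
        moreover have "fle \<mu> (kk *\<^sub>R ys n) (kk *\<^sub>R ys 0)"
          using le_scale[OF ys_anti[OF dec, of 0 n], of kk] kk1 by simp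
        ultimately show "fle \<mu> (kk *\<^sub>R ys n - ys 0) (kk *\<^sub>R ys 0)" by (rule le_trans)
      qed
      have "a (kk *\<^sub>R ys 0) n = T (g n)"
        unfolding a_def L.abs_of_nonneg[OF kys0] L.inf_absorb2[OF gle] ..
      moreover have "fle \<nu> (T (kk *\<^sub>R ys n - ys 0)) (T (g n))"
        unfolding g_def L.pprt_def by (intro T_mono[OF FR Tp] sup1)
      moreover have "fle \<nu> (kk *\<^sub>R z - T (ys 0)) (T (kk *\<^sub>R ys n - ys 0))"
      proof -
        have "fle \<nu> (kk *\<^sub>R z) (kk *\<^sub>R T (ys n))"
          using Fscale0[OF FR z TV _ zl[rule_format, of n], of kk] kk1 by simp
        then have "fle \<nu> (kk *\<^sub>R z + - T (ys 0)) (kk *\<^sub>R T (ys n) + - T (ys 0))"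
          by (rule fr_add[OF FR subspace_scale[OF S z] subspace_scale[OF S TV] subspace_neg[OF S TV]])
        then show ?thesis unfolding linear_diff[OF lin] linear_scale[OF lin] by simp
      qed
      ultimately show "fle \<nu> (kk *\<^sub>R z - T (ys 0)) (a (kk *\<^sub>R ys 0) n)"
        using Ftrans[OF FR zk TV TV] by metis
    qed
    then have "fle \<nu> (kk *\<^sub>R z) (0 + T (ys 0))"
      by (rule Fle_add[OF FR subspace_scale[OF S z] V0 TV])
    then show ?thesis unfolding kk_def by simp
  qed
  show ?thesis
    by (rule Farch[OF Ar z TV T_pos[OF Tp ys0[rule_format, of 0]] key])
qed

end



context fR begin

lemma L31:
  assumes P3: "\<forall>A. fuzzy_ideal \<mu> A \<and> uniformly_fuzzy_closed \<mu> A \<longrightarrow> fuzzy_sigma_ideal \<mu> A"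
  shows "fsigma_oc_property \<mu> TYPE('b::real_vector)"
  unfolding fsigma_oc_property_def fsigma_order_continuous_def
proof (intro allI impI, elim conjE)
  fix V :: "'b set" and \<nu> T xs
  assume Ar: "fuzzy_archimedean V \<nu>" and Tp: "fuzzy_positive \<mu> V \<nu> T" and xc: "forder_conv UNIV \<mu> xs 0"
  have FR: "fuzzy_riesz V \<nu>" using Ar by (simp add: fuzzy_archimedean_def)
  have S: "subspace V" using fr_sub[OF FR] .
  have V0: "0 \<in> V" using subspace_0[OF S] .
  have TV: "\<And>x. T x \<in> V" using T_in[OF Tp] .
  have lin: "linear T" using T_lin[OF Tp] .
  obtain ys where dec: "\<forall>n. fle \<mu> (ys (Suc n)) (ys n)" and yinf: "is_inf UNIV \<mu> (range ys) 0"
    and xl: "\<forall>n. fle \<mu> (eabs (xs n - 0)) (ys n)" using xc unfolding forder_conv_def by blast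
  have xl': "fle \<mu> (eabs (xs n)) (ys n)" for n using xl by simp
  have ys0: "\<forall>n. fle \<mu> 0 (ys n)" using le_trans[OF L.abs_ge_zero xl'] by blast
  show "forder_conv V \<nu> (T \<circ> xs) 0" unfolding forder_conv_def
  proof (intro exI[of _ "T \<circ> ys"] conjI allI)
    fix n
    show "(T \<circ> ys) n \<in> V" using TV by simp
    show "fle \<nu> ((T \<circ> ys) (Suc n)) ((T \<circ> ys) n)" using T_mono[OF FR Tp] dec by simp
    have "fle \<nu> (T (xs n)) (T (ys n))" using T_mono[OF FR Tp le_trans[OF L.abs_ge_self xl']] .
    moreover have "fle \<nu> (- T (xs n)) (T (ys n))"
      using T_mono[OF FR Tp le_trans[OF L.abs_ge_minus_self xl']] linear_neg[OF lin] by simp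
    ultimately have "fle \<nu> (fsup V \<nu> (T (xs n)) (- T (xs n))) (T (ys n))"
      by (intro fsup_least[OF FR TV subspace_neg[OF S TV] TV])
    then show "fle \<nu> (fabs V \<nu> ((T \<circ> xs) n - 0)) ((T \<circ> ys) n)" by (simp add: fabs_def)
  next
    show "is_inf V \<nu> (range (T \<circ> ys)) 0"
      unfolding is_inf_def is_lb_def
    proof (intro conjI allI impI ballI V0)
      fix s assume "s \<in> range (T \<circ> ys)"
      then obtain n where "s = T (ys n)" by auto
      then show "fle \<nu> 0 s" using T_pos[OF Tp ys0[rule_format, of n]] by simp
    next
      fix u assume u: "u \<in> V \<and> (\<forall>s\<in>range (T \<circ> ys). fle \<nu> u s)"
      show "fle \<nu> u 0"
        by (rule inf_zero[OF P3 Ar Tp ys0 dec yinf]) (use u in auto)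
    qed
  qed
qed

lemma L12:
  assumes "fsigma_oc_property \<mu> TYPE('b::real_vector)"
  shows "fhom_sigma_oc_property \<mu> TYPE('b)"
  unfolding fhom_sigma_oc_property_def
proof (intro allI impI, elim conjE)
  fix V :: "'b set" and \<nu> T
  assume Ar: "fuzzy_archimedean V \<nu>" and H: "fuzzy_lattice_hom \<mu> V \<nu> T"
  have FR: "fuzzy_riesz V \<nu>" using Ar by (simp add: fuzzy_archimedean_def)
  have V0: "0 \<in> V" using subspace_0[OF fr_sub[OF FR]] .
  have lin: "linear T" and TV: "\<And>x. T x \<in> V" and hom: "\<And>x y. T (esup x y) = fsup V \<nu> (T x) (T y)"
    using H unfolding fuzzy_lattice_hom_def by auto
  have "fuzzy_positive \<mu> V \<nu> T"
    unfolding fuzzy_positive_def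
  proof (intro conjI allI impI)
    show "linear T" by fact
    show "range T \<subseteq> V" using TV by auto
    fix x assume x: "fle \<mu> 0 x"
    have "T x = T (esup x 0)" using L.sup_absorb1[OF x] by simp
    also have "\<dots> = fsup V \<nu> (T x) 0" using hom linear_0[OF lin] by simp
    finally have e: "T x = fsup V \<nu> (T x) 0" .
    show "fle \<nu> 0 (T x)" using fsup_ge2[OF FR TV[of x] V0] by (subst e)
  qed
  then show "fsigma_order_continuous \<mu> V \<nu> T" using assms Ar unfolding fsigma_oc_property_def by blast
qed

end



lemma complement_proj:
  fixes A :: "'a::real_vector set"
  assumes A: "subspace A"
  obtains W P where "subspace W" "linear P" "\<And>x. P x \<in> W" "\<And>x. x - P x \<in> A" "\<And>w. w \<in> W \<Longrightarrow> P w = w"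
    "\<And>a. a \<in> A \<Longrightarrow> P a = 0"
proof -
  obtain BA where BA: "{} \<subseteq> BA" "BA \<subseteq> A" "independent BA" "A \<subseteq> span BA"
    using maximal_independent_subset_extend[of "{}" A] independent_empty by blast
  define C where "C = extend_basis BA"
  have C: "BA \<subseteq> C" "independent C" "span C = UNIV"
    unfolding C_def using extend_basis_superset[OF BA(3)] independent_extend_basis[OF BA(3)] span_extend_basis[OF BA(3)]
    by auto
  define Q where "Q = construct BA (\<lambda>x. x)"
  have Ql: "linear Q" unfolding Q_def by (rule linear_construct[OF BA(3)])
  have QA: "Q x \<in> A" for x
  proof -
    have "Q x \<in> span ((\<lambda>x. x) ` BA)" unfolding Q_def by (rule construct_in_span[OF BA(3)])
    also have "\<dots> \<subseteq> A" using span_minimal[OF _ A] BA(2) by simp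
    finally show ?thesis .
  qed
  have Qout: "Q v = 0" if "v \<in> span (C - BA)" for v
    unfolding Q_def using construct_outside[OF BA(3)] that unfolding C_def by blast
  have Qin: "Q v = v" if "v \<in> span BA" for v
    by (rule linear_eq_on[OF Ql linear_ident that]) (simp add: Q_def construct_basis[OF BA(3)])
  define W where "W = span (C - BA)"
  define P where "P x = x - Q x" for x
  have "subspace W" unfolding W_def by simp
  moreover have "linear P" unfolding P_def[abs_def] by (intro linear_compose_sub linear_ident Ql)
  moreover have "P x \<in> W" for x
  proof -
    have "x \<in> span ((C - BA) \<union> BA)" using C by (simp add: Un_absorb2)
    then obtain u v where uv: "x = u + v" "u \<in> span (C - BA)" "v \<in> span BA" unfolding span_Un by blast
    have "P x = u" unfolding P_def uv(1) linear_add[OF Ql] Qout[OF uv(2)] Qin[OF uv(3)] by simp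
    then show ?thesis using uv(2) unfolding W_def by simp
  qed
  moreover have "x - P x \<in> A" for x unfolding P_def using QA by simp
  moreover have "P w = w" if "w \<in> W" for w unfolding P_def using Qout that unfolding W_def by simp
  moreover have "P a = 0" if "a \<in> A" for a unfolding P_def using Qin that BA(4) by auto
  ultimately show ?thesis using that by blast
qed

context fR begin

lemma ideal_sub: "fuzzy_ideal \<mu> A \<Longrightarrow> subspace A" by (simp add: fuzzy_ideal_def)

lemma ideal_solid: "fuzzy_ideal \<mu> A \<Longrightarrow> y \<in> A \<Longrightarrow> fle \<mu> (eabs x) (eabs y) \<Longrightarrow> x \<in> A"
  unfolding fuzzy_ideal_def by blast

lemma ideal_abs: "fuzzy_ideal \<mu> A \<Longrightarrow> a \<in> A \<Longrightarrow> eabs a \<in> A"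
  by (rule ideal_solid[where y=a]) (simp_all add: L.order_refl)

lemma ideal_le_pos: "fuzzy_ideal \<mu> A \<Longrightarrow> y \<in> A \<Longrightarrow> fle \<mu> 0 x \<Longrightarrow> fle \<mu> x (eabs y) \<Longrightarrow> x \<in> A"
  by (rule ideal_solid[where y=y]) (simp_all add: L.abs_of_nonneg)

lemma birkhoff: "fle \<mu> (eabs (esup a b - esup c d)) (eabs (a - c) + eabs (b - d))"
proof -
  have g: "fle \<mu> (esup a b - esup c d) (eabs (a - c) + eabs (b - d))" for a b c d
  proof -
    let ?r = "eabs (a - c) + eabs (b - d)"
    have "fle \<mu> a (c + eabs (a - c))" using L.add_left_mono[OF L.abs_ge_self[of "a - c"], of c] by simp
    also have "fle \<mu> \<dots> (esup c d + ?r)"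
      by (intro L.add_mono sup1 L.add_increasing2 L.abs_ge_zero L.order_refl)
    finally have 1: "fle \<mu> a (esup c d + ?r)" .
    have "fle \<mu> b (d + eabs (b - d))" using L.add_left_mono[OF L.abs_ge_self[of "b - d"], of d] by simp
    also have "fle \<mu> \<dots> (esup c d + ?r)"
      by (intro L.add_mono sup2 L.add_increasing L.abs_ge_zero L.order_refl)
    finally have 2: "fle \<mu> b (esup c d + ?r)" .
    have "fle \<mu> (esup a b) (esup c d + ?r)" by (rule sup_least[OF 1 2])
    then show ?thesis unfolding L.diff_le_eq add.commute[of "eabs (a - c) + eabs (b - d)"] .
  qed
  show ?thesis
  proof (rule L.abs_leI)
    show "fle \<mu> (esup a b - esup c d) (eabs (a - c) + eabs (b - d))" by (rule g)
    have "fle \<mu> (esup c d - esup a b) (eabs (c - a) + eabs (d - b))" by (rule g)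
    then show "fle \<mu> (- (esup a b - esup c d)) (eabs (a - c) + eabs (b - d))"
      by (simp only: minus_diff_eq L.abs_minus_commute[of c a] L.abs_minus_commute[of d b])
  qed
qed

end



locale fQ = fR \<mu> for \<mu> :: "'a::real_vector \<Rightarrow> 'a \<Rightarrow> real" +
  fixes A W :: "'a set" and P :: "'a \<Rightarrow> 'a"
  assumes Aid: "fuzzy_ideal \<mu> A" and Acl: "uniformly_fuzzy_closed \<mu> A"
    and Wsub: "subspace W" and Plin: "linear P" and PW: "\<And>x. P x \<in> W"
    and PA: "\<And>x. x - P x \<in> A" and PWid: "\<And>w. w \<in> W \<Longrightarrow> P w = w"
    and PAz: "\<And>a. a \<in> A \<Longrightarrow> P a = 0"
begin

lemma scale_nonneg: "fle \<mu> 0 x \<Longrightarrow> 0 \<le> c \<Longrightarrow> fle \<mu> 0 (c *\<^sub>R x)"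
  using le_scale[of 0 x c] by simp

definition qle where "qle x y \<longleftrightarrow> (\<exists>a\<in>A. fle \<mu> x (y + a))"
definition nu :: "'a \<Rightarrow> 'a \<Rightarrow> real" where "nu x y = (if qle x y then 1 else 0)"

lemma nu_le: "fle nu x y \<longleftrightarrow> qle x y" by (simp add: fle_def nu_def)

lemma Asub: "subspace A" using ideal_sub[OF Aid] .
lemma A0: "0 \<in> A" using subspace_0[OF Asub] .
lemma Aadd: "a \<in> A \<Longrightarrow> b \<in> A \<Longrightarrow> a + b \<in> A" using subspace_add[OF Asub] .
lemma Ascale: "a \<in> A \<Longrightarrow> c *\<^sub>R a \<in> A" using subspace_scale[OF Asub] .
lemma Aneg: "a \<in> A \<Longrightarrow> - a \<in> A" using subspace_neg[OF Asub] .
lemma Adiff: "a \<in> A \<Longrightarrow> b \<in> A \<Longrightarrow> a - b \<in> A" using subspace_diff[OF Asub] .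
lemma Aabs: "a \<in> A \<Longrightarrow> eabs a \<in> A" using ideal_abs[OF Aid] .
lemma W0: "0 \<in> W" using subspace_0[OF Wsub] .
lemma AW: "x \<in> A \<Longrightarrow> x \<in> W \<Longrightarrow> x = 0" using PAz PWid by force
lemma PA': "P x - x \<in> A" using Aneg[OF PA[of x]] by simp

lemma qle_le: "fle \<mu> x y \<Longrightarrow> qle x y" unfolding qle_def using A0 by force
lemma qle_refl: "qle x x" using qle_le[OF le_refl] .
lemma qle_trans: assumes "qle x y" "qle y z" shows "qle x z"
proof -
  obtain a b where a: "a \<in> A" "fle \<mu> x (y + a)" and b: "b \<in> A" "fle \<mu> y (z + b)"
    using assms unfolding qle_def by blast
  have "fle \<mu> (y + a) (z + b + a)" using le_add[OF b(2)] .
  then have "fle \<mu> x (z + (b + a))" using le_trans[OF a(2)] by (simp add: add.assoc)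
  then show ?thesis unfolding qle_def using Aadd[OF b(1) a(1)] by blast
qed
lemma qle_add: assumes "qle x y" shows "qle (x + z) (y + z)"
proof -
  obtain a where a: "a \<in> A" "fle \<mu> x (y + a)" using assms unfolding qle_def by blast
  have "fle \<mu> (x + z) (y + z + a)" using le_add[OF a(2), of z] by (simp add: algebra_simps)
  then show ?thesis unfolding qle_def using a(1) by blast
qed
lemma qle_scale: assumes "qle x y" "0 < c" shows "qle (c *\<^sub>R x) (c *\<^sub>R y)"
proof -
  obtain a where a: "a \<in> A" "fle \<mu> x (y + a)" using assms unfolding qle_def by blast
  have "fle \<mu> (c *\<^sub>R x) (c *\<^sub>R y + c *\<^sub>R a)" using le_scale[OF a(2), of c] assms(2) by (simp add: scaleR_add_right)
  then show ?thesis unfolding qle_def using Ascale[OF a(1)] by blast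
qed
lemma qle_antisym: assumes "qle x y" "qle y x" shows "x - y \<in> A"
proof -
  obtain a where a: "a \<in> A" "fle \<mu> x (y + a)" using assms unfolding qle_def by blast
  obtain b where b: "b \<in> A" "fle \<mu> y (x + b)" using assms unfolding qle_def by blast
  let ?c = "eabs a + eabs b"
  have c0: "fle \<mu> 0 ?c" by (intro L.add_nonneg_nonneg L.abs_ge_zero)
  have cA: "?c \<in> A" using Aadd[OF Aabs[OF a(1)] Aabs[OF b(1)]] .
  have "fle \<mu> (x - y) a" unfolding L.diff_le_eq add.commute[of a y] by (rule a(2))
  also have "fle \<mu> a ?c" by (rule L.order_trans[OF L.abs_ge_self L.add_increasing2[OF L.abs_ge_zero L.order_refl]])
  finally have 1: "fle \<mu> (x - y) ?c" .
  have "fle \<mu> (y - x) b" unfolding L.diff_le_eq add.commute[of b x] by (rule b(2))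
  also have "fle \<mu> b ?c" by (rule L.order_trans[OF L.abs_ge_self L.add_increasing[OF L.abs_ge_zero L.order_refl]])
  finally have 2: "fle \<mu> (- (x - y)) ?c" by (simp only: minus_diff_eq)
  have "fle \<mu> (eabs (x - y)) (eabs ?c)" unfolding L.abs_of_nonneg[OF c0] by (rule L.abs_leI[OF 1 2])
  then show ?thesis using ideal_solid[OF Aid cA] by blast
qed
lemma qle_P1: "qle x (P x)" unfolding qle_def using PA[of x] by (intro bexI[of _ "x - P x"]) (simp_all add: le_refl)
lemma qle_P2: "qle (P x) x" unfolding qle_def using PA'[of x] by (intro bexI[of _ "P x - x"]) (simp_all add: le_refl)

lemma qle_bound: assumes "qle x u" "qle y u"
  obtains c where "c \<in> A" "fle \<mu> x (u + c)" "fle \<mu> y (u + c)"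
proof -
  obtain a where a: "a \<in> A" "fle \<mu> x (u + a)" using assms unfolding qle_def by blast
  obtain b where b: "b \<in> A" "fle \<mu> y (u + b)" using assms unfolding qle_def by blast
  let ?c = "eabs a + eabs b"
  have cA: "?c \<in> A" using Aadd[OF Aabs[OF a(1)] Aabs[OF b(1)]] .
  have ac: "fle \<mu> a ?c" by (rule L.order_trans[OF L.abs_ge_self L.add_increasing2[OF L.abs_ge_zero L.order_refl]])
  have bc: "fle \<mu> b ?c" by (rule L.order_trans[OF L.abs_ge_self L.add_increasing[OF L.abs_ge_zero L.order_refl]])
  show ?thesis
    by (rule that[OF cA le_trans[OF a(2) L.add_left_mono[OF ac]] le_trans[OF b(2) L.add_left_mono[OF bc]]])
qed

lemma qle_bound2: assumes "qle u x" "qle u y"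
  obtains c where "c \<in> A" "fle \<mu> u (x + c)" "fle \<mu> u (y + c)"
proof -
  obtain a where a: "a \<in> A" "fle \<mu> u (x + a)" using assms unfolding qle_def by blast
  obtain b where b: "b \<in> A" "fle \<mu> u (y + b)" using assms unfolding qle_def by blast
  let ?c = "eabs a + eabs b"
  have cA: "?c \<in> A" using Aadd[OF Aabs[OF a(1)] Aabs[OF b(1)]] .
  have ac: "fle \<mu> a ?c" by (rule L.order_trans[OF L.abs_ge_self L.add_increasing2[OF L.abs_ge_zero L.order_refl]])
  have bc: "fle \<mu> b ?c" by (rule L.order_trans[OF L.abs_ge_self L.add_increasing[OF L.abs_ge_zero L.order_refl]])
  show ?thesis
    by (rule that[OF cA le_trans[OF a(2) L.add_left_mono[OF ac]] le_trans[OF b(2) L.add_left_mono[OF bc]]])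
qed

lemma qle_sup_least: assumes "qle x u" "qle y u" shows "qle (esup x y) u"
proof -
  obtain c where c: "c \<in> A" "fle \<mu> x (u + c)" "fle \<mu> y (u + c)" using qle_bound[OF assms] .
  show ?thesis unfolding qle_def using c(1) sup_least[OF c(2,3)] by blast
qed

lemma qle_inf_greatest: assumes "qle u x" "qle u y" shows "qle u (finf x y)"
proof -
  obtain c where c: "c \<in> A" "fle \<mu> u (x + c)" "fle \<mu> u (y + c)" using qle_bound2[OF assms] .
  have "fle \<mu> u (finf (x + c) (y + c))" by (rule inf_greatest[OF c(2,3)])
  then have "fle \<mu> u (finf x y + c)" by (simp only: L.add_inf_distrib_right)
  then show ?thesis unfolding qle_def using c(1) by blast
qed

lemma q_sup: "is_sup W nu {x, y} (P (esup x y))"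
  unfolding is_sup_def is_ub_def nu_le
  using PW qle_trans[OF qle_le[OF sup1] qle_P1] qle_trans[OF qle_le[OF sup2] qle_P1]
    qle_trans[OF qle_P2 qle_sup_least] by blast

lemma q_inf: "is_inf W nu {x, y} (P (finf x y))"
  unfolding is_inf_def is_lb_def nu_le
  using PW qle_trans[OF qle_P2 qle_le[OF inf1]] qle_trans[OF qle_P2 qle_le[OF inf2]]
    qle_trans[OF qle_inf_greatest qle_P1] by blast

lemma q_fo: "fuzzy_order W nu"
  unfolding fuzzy_order_def
proof (intro conjI ballI impI)
  fix x y assume x: "x \<in> W" and y: "y \<in> W"
  show "0 \<le> nu x y" "nu x y \<le> 1" by (simp_all add: nu_def)
  assume "nu x y + nu y x > 1"
  then have "qle x y" "qle y x" by (auto simp: nu_def split: if_splits)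
  then have "x - y \<in> A" by (rule qle_antisym)
  moreover have "x - y \<in> W" using subspace_diff[OF Wsub x y] .
  ultimately show "x = y" using AW by force
next
  fix x assume "x \<in> W" then show "nu x x = 1" by (simp add: nu_def qle_refl)
next
  fix x z assume x: "x \<in> W" and z: "z \<in> W"
  show "(SUP y\<in>W. min (nu x y) (nu y z)) \<le> nu x z"
  proof (rule cSUP_least)
    show "W \<noteq> {}" using W0 by blast
    fix y assume "y \<in> W"
    show "min (nu x y) (nu y z) \<le> nu x z"
      using qle_trans[of x y z] by (auto simp: nu_def)
  qed
qed

lemma q_riesz: "fuzzy_riesz W nu"
  unfolding fuzzy_riesz_def fuzzy_ordered_linear_space_def
proof (intro conjI ballI impI allI Wsub q_fo)
  fix x1 x2 x assume "nu x1 x2 > 1/2"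
  then have q: "qle x1 x2" by (simp add: nu_def split: if_splits)
  show "nu x1 x2 \<le> nu (x1 + x) (x2 + x)" using qle_add[OF q] by (simp add: nu_def)
next
  fix x1 x2 and \<alpha> :: real assume "nu x1 x2 > 1/2" "\<alpha> > 0"
  then have q: "qle x1 x2" by (simp add: nu_def split: if_splits)
  show "nu x1 x2 \<le> nu (\<alpha> *\<^sub>R x1) (\<alpha> *\<^sub>R x2)" using qle_scale[OF q \<open>\<alpha> > 0\<close>] by (simp add: nu_def)
next
  fix x y show "\<exists>s. is_sup W nu {x, y} s" using q_sup by blast
  show "\<exists>s. is_inf W nu {x, y} s" using q_inf by blast
qed

lemma q_fsup: "fsup W nu x y = P (esup x y)"
  by (rule fsup_eqI[OF q_riesz q_sup])

lemma q_hom: "fuzzy_lattice_hom \<mu> W nu P"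
  unfolding fuzzy_lattice_hom_def
proof (intro conjI allI Plin)
  show "range P \<subseteq> W" using PW by auto
  fix x y
  let ?d = "esup x y - esup (P x) (P y)"
  let ?r = "eabs (x - P x) + eabs (y - P y)"
  have r0: "fle \<mu> 0 ?r" by (intro L.add_nonneg_nonneg L.abs_ge_zero)
  have rA: "?r \<in> A" using Aadd[OF Aabs[OF PA] Aabs[OF PA]] .
  have "fle \<mu> (eabs ?d) (eabs ?r)" unfolding L.abs_of_nonneg[OF r0] by (rule birkhoff)
  then have "?d \<in> A" using ideal_solid[OF Aid rA] by blast
  then have "P ?d = 0" by (rule PAz)
  then have "P (esup x y) = P (esup (P x) (P y))" unfolding linear_diff[OF Plin] by simp
  then show "P (esup x y) = fsup W nu (P x) (P y)" by (simp add: q_fsup)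
qed

lemma q_arch: "fuzzy_archimedean W nu"
  unfolding fuzzy_archimedean_def
proof (intro conjI q_riesz ballI impI notI)
  fix x assume xp: "x \<in> fpos W nu" and x0: "x \<noteq> 0"
  assume "\<exists>u. is_ub W nu {l *\<^sub>R x | l::real. l > 0} u"
  then obtain u where uW: "u \<in> W" and ub: "\<And>l::real. l > 0 \<Longrightarrow> qle (l *\<^sub>R x) u"
    unfolding is_ub_def nu_le by blast
  have xW: "x \<in> W" and q0: "qle 0 x" using xp by (auto simp: fpos_def nu_le)
  obtain a0 where a0: "a0 \<in> A" "fle \<mu> 0 (x + a0)" using q0 unfolding qle_def by auto
  have nA: "L.nprt x \<in> A"
  proof (rule ideal_solid[OF Aid a0(1)])
    have "fle \<mu> (0 + - x) (x + a0 + - x)" by (rule le_add[OF a0(2)])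
    then have "fle \<mu> (- x) a0" by (simp add: algebra_simps)
    then have "fle \<mu> (- x) (eabs a0)" using L.order_trans[OF _ L.abs_ge_self] by blast
    then have "fle \<mu> (L.pprt (- x)) (eabs a0)" unfolding L.pprt_def by (rule sup_least) (rule L.abs_ge_zero)
    then show "fle \<mu> (eabs (L.nprt x)) (eabs a0)"
      unfolding L.abs_of_nonpos[OF L.nprt_le_zero] L.pprt_neg[symmetric] .
  qed
  have pA: "L.pprt x \<in> A"
  proof -
    define \<delta> where "\<delta> n = 1 / (real n + 1)" for n :: nat
    have d0: "\<delta> n > 0" for n unfolding \<delta>_def by simp
    have "\<exists>a\<in>A. fle \<mu> ((real n + 1) *\<^sub>R x) (u + a)" for n :: nat
      using ub[of "real n + 1"] unfolding qle_def by simp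
    then obtain a where aA: "\<And>n. a n \<in> A" and al: "\<And>n. fle \<mu> ((real n + 1) *\<^sub>R x) (u + a n)" by metis
    define v where "v n = L.pprt (L.pprt x - \<delta> n *\<^sub>R eabs u)" for n
    have du0: "fle \<mu> 0 (\<delta> n *\<^sub>R eabs u)" for n using d0 by (intro scale_nonneg L.abs_ge_zero less_imp_le)
    have vA: "v n \<in> A" for n
    proof (rule ideal_le_pos[OF Aid Ascale[OF aA[of n], of "\<delta> n"]])
      show "fle \<mu> 0 (v n)" unfolding v_def by (rule L.zero_le_pprt)
      have "fle \<mu> (\<delta> n *\<^sub>R ((real n + 1) *\<^sub>R x)) (\<delta> n *\<^sub>R (u + a n))"
        using d0 by (intro le_scale al) (simp add: less_imp_le)
      then have "fle \<mu> x (\<delta> n *\<^sub>R u + \<delta> n *\<^sub>R a n)" unfolding \<delta>_def by (simp add: scaleR_add_right)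
      also have "fle \<mu> \<dots> (\<delta> n *\<^sub>R eabs u + \<delta> n *\<^sub>R eabs (a n))"
        using d0 by (intro L.add_mono le_scale L.abs_ge_self) (simp_all add: less_imp_le)
      finally have x1: "fle \<mu> x (\<delta> n *\<^sub>R eabs u + \<delta> n *\<^sub>R eabs (a n))" .
      have da0: "fle \<mu> 0 (\<delta> n *\<^sub>R eabs (a n))" using d0 by (intro scale_nonneg L.abs_ge_zero less_imp_le)
      have "fle \<mu> (L.pprt x) (\<delta> n *\<^sub>R eabs u + \<delta> n *\<^sub>R eabs (a n))" unfolding L.pprt_def
        by (rule sup_least[OF x1 L.add_nonneg_nonneg[OF du0 da0]])
      then have "fle \<mu> (L.pprt x - \<delta> n *\<^sub>R eabs u) (\<delta> n *\<^sub>R eabs (a n))"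
        unfolding L.diff_le_eq by (simp only: add.commute)
      then have "fle \<mu> (v n) (\<delta> n *\<^sub>R eabs (a n))" unfolding v_def L.pprt_def by (rule sup_least[OF _ da0])
      moreover have "\<bar>\<delta> n\<bar> = \<delta> n" using d0[of n] by simp
      ultimately show "fle \<mu> (v n) (eabs (\<delta> n *\<^sub>R a n))" by (simp add: abs_scale)
    qed
    have conv: "ru_conv \<mu> v (L.pprt x)"
      unfolding ru_conv_def
    proof (intro bexI[of _ "eabs u"] allI impI)
      show "eabs u \<in> fpos UNIV \<mu>" by (simp add: fpos_def)
      fix \<epsilon> :: real assume ep: "\<epsilon> > 0"
      show "\<exists>N. \<forall>n>N. fle \<mu> (eabs (L.pprt x - v n)) (\<epsilon> *\<^sub>R eabs u)"
      proof (intro exI[of _ "nat \<lceil>1 / \<epsilon>\<rceil>"] allI impI)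
        fix n assume n: "n > nat \<lceil>1 / \<epsilon>\<rceil>"
        have "real n + 1 > 1 / \<epsilon>" using n by linarith
        then have "1 / (real n + 1) < \<epsilon>" using ep by (simp add: field_simps)
        then have de: "\<delta> n \<le> \<epsilon>" unfolding \<delta>_def by simp
        have "fle \<mu> (L.pprt x - \<delta> n *\<^sub>R eabs u) (L.pprt x)"
          using L.add_left_mono[OF du0[of n], of "L.pprt x - \<delta> n *\<^sub>R eabs u"] by simp
        then have vle: "fle \<mu> (v n) (L.pprt x)" unfolding v_def L.pprt_def[of "L.pprt x - \<delta> n *\<^sub>R eabs u"]
          by (rule sup_least[OF _ L.zero_le_pprt])
        have "fle \<mu> (L.pprt x - \<delta> n *\<^sub>R eabs u) (v n)" unfolding v_def L.pprt_def[of "L.pprt x - \<delta> n *\<^sub>R eabs u"]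
          by (rule sup1)
        then have "fle \<mu> (L.pprt x - v n) (\<delta> n *\<^sub>R eabs u)"
          unfolding L.diff_le_eq by (simp only: add.commute L.diff_le_eq[symmetric])
        also have "fle \<mu> \<dots> (\<epsilon> *\<^sub>R eabs u)" by (rule O.scaleR_right_mono[OF de L.abs_ge_zero])
        finally have "fle \<mu> (L.pprt x - v n) (\<epsilon> *\<^sub>R eabs u)" .
        moreover have "fle \<mu> 0 (L.pprt x - v n)" using le_diff0[OF vle] .
        ultimately show "fle \<mu> (eabs (L.pprt x - v n)) (\<epsilon> *\<^sub>R eabs u)" by (simp add: L.abs_of_nonneg)
      qed
    qed
    show ?thesis using Acl vA conv unfolding uniformly_fuzzy_closed_def by blast
  qed
  have "x \<in> A" using Aadd[OF pA nA] L.prts[of x] by simp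
  then show False using AW xW x0 by blast
qed

end



context fR begin

lemma L23:
  assumes H: "fhom_sigma_oc_property \<mu> TYPE('a)"
  shows "\<forall>A. fuzzy_ideal \<mu> A \<and> uniformly_fuzzy_closed \<mu> A \<longrightarrow> fuzzy_sigma_ideal \<mu> A"
proof (intro allI impI, elim conjE)
  fix A assume Aid: "fuzzy_ideal \<mu> A" and Acl: "uniformly_fuzzy_closed \<mu> A"
  obtain W P where WP: "subspace W" "linear P" "\<And>x. P x \<in> W" "\<And>x. x - P x \<in> A"
    "\<And>w. w \<in> W \<Longrightarrow> P w = w" "\<And>a. a \<in> A \<Longrightarrow> P a = 0"
    using complement_proj[OF ideal_sub[OF Aid]] by blast
  interpret Q: fQ \<mu> A W P
    by (rule fQ.intro[OF fR_axioms fQ_axioms.intro]) (use Aid Acl WP in auto)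
  have cont: "fsigma_order_continuous \<mu> W Q.nu P"
    using H Q.q_arch Q.q_hom unfolding fhom_sigma_oc_property_def by blast
  show "fuzzy_sigma_ideal \<mu> A"
    unfolding fuzzy_sigma_ideal_def
  proof (intro conjI Aid allI impI, elim conjE)
    fix xs x assume xsA: "\<forall>n. xs n \<in> A \<inter> fpos UNIV \<mu>" and inc: "\<forall>n. fle \<mu> (xs n) (xs (Suc n))"
      and sup: "is_sup UNIV \<mu> (range xs) x"
    define zs where "zs n = x - xs n" for n
    have xsx: "fle \<mu> (xs n) x" for n using sup unfolding is_sup_def is_ub_def by blast
    have zs0: "fle \<mu> 0 (zs n)" for n unfolding zs_def by (rule le_diff0[OF xsx])
    have fc: "forder_conv UNIV \<mu> zs 0"
      unfolding forder_conv_def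
    proof (intro exI[of _ zs] conjI allI UNIV_I)
      fix n
      show "fle \<mu> (zs (Suc n)) (zs n)" unfolding zs_def using inc by (intro L.diff_left_mono) blast
      show "fle \<mu> (eabs (zs n - 0)) (zs n)" using L.abs_of_nonneg[OF zs0[of n]] le_refl by simp
    next
      show "is_inf UNIV \<mu> (range zs) 0"
        unfolding is_inf_def is_lb_def
      proof (intro conjI ballI allI impI UNIV_I)
        fix s assume "s \<in> range zs" then show "fle \<mu> 0 s" using zs0 by auto
      next
        fix l assume "l \<in> UNIV \<and> (\<forall>s\<in>range zs. fle \<mu> l s)"
        then have l: "fle \<mu> l (x - xs n)" for n unfolding zs_def by auto
        have "fle \<mu> (xs n) (x - l)" for n
          using le_add[OF l[of n], of "xs n - l"] by (simp add: algebra_simps)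
        then have "fle \<mu> x (x - l)" using sup unfolding is_sup_def is_ub_def by blast
        then have "fle \<mu> (x + (l - x)) (x - l + (l - x))" by (rule le_add)
        then show "fle \<mu> l 0" by simp
      qed
    qed
    then have "forder_conv W Q.nu (P \<circ> zs) 0" using cont unfolding fsigma_order_continuous_def by blast
    then obtain ys where ysW: "\<forall>n. ys n \<in> W" and yinf: "is_inf W Q.nu (range ys) 0"
      and bd: "\<forall>n. fle Q.nu (fabs W Q.nu ((P \<circ> zs) n - 0)) (ys n)"
      unfolding forder_conv_def by blast
    have Pz: "(P \<circ> zs) n - 0 = P x" for n
    proof -
      have "xs n \<in> A" using xsA by blast
      then show ?thesis unfolding zs_def o_def linear_diff[OF WP(2)] using WP(6) by simp
    qed
    have fa: "fabs W Q.nu (P x) = P (eabs (P x))" unfolding fabs_def Q.q_fsup by (simp add: fabs_def)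
    have "is_lb W Q.nu (range ys) (P (eabs (P x)))"
      unfolding is_lb_def using bd WP(3) unfolding Pz fa by blast
    then have "fle Q.nu (P (eabs (P x))) 0" using yinf unfolding is_inf_def by blast
    then have "Q.qle (eabs (P x)) 0" using Q.qle_trans[OF Q.qle_P1] unfolding Q.nu_le by blast
    then obtain a where a: "a \<in> A" "fle \<mu> (eabs (P x)) (0 + a)" unfolding Q.qle_def by blast
    have "fle \<mu> (eabs (P x)) (eabs a)" using le_trans[OF _ L.abs_ge_self] a(2) by simp
    then have "P x \<in> A" using ideal_solid[OF Aid a(1)] by blast
    then have "P x = 0" using Q.AW WP(3) by blast
    then show "x \<in> A" using WP(4)[of x] by simp
  qed
qed

end

theorem theorem4p8:
  fixes \<mu> :: "'a::real_vector \<Rightarrow> 'a \<Rightarrow> real"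
  assumes "fuzzy_riesz UNIV \<mu>"
  defines "P3 \<equiv> (\<forall>A. fuzzy_ideal \<mu> A \<and> uniformly_fuzzy_closed \<mu> A \<longrightarrow> fuzzy_sigma_ideal \<mu> A)"
  shows "(fsigma_oc_property \<mu> TYPE('a) \<longleftrightarrow> fhom_sigma_oc_property \<mu> TYPE('a))
     \<and> (fhom_sigma_oc_property \<mu> TYPE('a) \<longleftrightarrow> P3)
     \<and> (P3 \<longrightarrow> fsigma_oc_property \<mu> TYPE('b::real_vector)
                \<and> fhom_sigma_oc_property \<mu> TYPE('b))"
proof -
  interpret fR \<mu> by unfold_locales (rule assms(1))
  have a: "fhom_sigma_oc_property \<mu> TYPE('a) \<Longrightarrow> P3" unfolding P3_def by (rule L23)
  have b1: "P3 \<Longrightarrow> fsigma_oc_property \<mu> TYPE('a)" unfolding P3_def by (rule L31)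
  have b2: "P3 \<Longrightarrow> fsigma_oc_property \<mu> TYPE('b)" unfolding P3_def by (rule L31)
  have c1: "fsigma_oc_property \<mu> TYPE('a) \<Longrightarrow> fhom_sigma_oc_property \<mu> TYPE('a)" by (rule L12)
  have c2: "fsigma_oc_property \<mu> TYPE('b) \<Longrightarrow> fhom_sigma_oc_property \<mu> TYPE('b)" by (rule L12)
  show ?thesis using a b1 b2 c1 c2 by blast
qed


end
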